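(* Let $i\in[n-2]$ and $a\in\mathbb{Q}[x_1,\dots,x_n][S_n^{i\searrow}]$, and let $y\in\{x_1,\dots,x_n\}$. Then $a\odot R_i(y)=a\odot(y-\theta_{i+1})R_{i+1}(y)$.
   Context: Permutations in one-line notation, $wt_{i,j}$ is $w$ with positions $i<j$ swapped, $\ell$ the number of inversions, $u\lessdot w$ iff $w=ut_{i,j}$ with $\ell(w)=\ell(u)+1$. $S_n^{i\searrow}=\{v\in S_n:v(i+1)>\dots>v(n)\}$, and $\mathbb{Q}[x_1,\dots,x_n][S_n^{i\searrow}]$ is the span of $S_n^{i\searrow}$ over the polynomial ring. Fomin–Kirillov algebra $\mathcal{E}_n$: generators $d_{i,j}$ ($1\le i<j\le n$), relations $d_{i,j}^2=0$; $d_{i,j}d_{j,k}=d_{i,k}d_{i,j}+d_{j,k}d_{i,k}$ and $d_{j,k}d_{i,j}=d_{i,j}d_{i,k}+d_{i,k}d_{j,k}$ ($i<j<k$); $d_{i,j}d_{k,l}=d_{k,l}d_{i,j}$ ($i,j,k,l$ distinct). Right action: $w\odot d_{i,j}=wt_{i,j}$ if $wt_{i,j}\lessdot w$, else $0$; $\mathbb{Q}[x_1,\dots,x_n]\otimes\mathcal{E}_n$ acts on $\mathbb{Q}[x_1,\dots,x_n][S_n]$ by $(fw)\odot(g\otimes e)=fg(w\odot e)$. $B_{i,j}=d_{1,j}+\dots+d_{i,j}$; $R_i(y)=(y+B_{i,i+1})(y+B_{i,i+2})\cdots(y+B_{i,n})$. Dunkl element $\theta_i=-\sum_{j<i}d_{j,i}+\sum_{j>i}d_{i,j}$.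 *)

theory Defs
  imports Complex_Main "HOL-Library.Poly_Mapping" "HOL-Combinatorics.Transposition" "HOL-Combinatorics.Permutations"
begin

text \<open>Q[x_1,...,x_n]: multivariate polynomials with rational coefficients,
  represented as finitely supported maps from monomials (exponent vectors) to coefficients.\<close>
type_synonym qpoly = "(nat \<Rightarrow>\<^sub>0 nat) \<Rightarrow>\<^sub>0 rat"

definition Xvar :: "nat \<Rightarrow> qpoly" where
  "Xvar k = Poly_Mapping.single (Poly_Mapping.single k 1) 1"

text \<open>Elements of Q[x][S_n]: coefficient functions on permutations (in one-line notation,
  i.e. bijections of {1..n}); coefficients of non-permutations are required to be 0.\<close>
type_synonym elt = "(nat \<Rightarrow> nat) \<Rightarrow> qpoly"

definition inv_num :: "nat \<Rightarrow> (nat \<Rightarrow> nat) \<Rightarrow> nat" where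
  "inv_num n w = card {(p, q). 1 \<le> p \<and> p < q \<and> q \<le> n \<and> w p > w q}"

definition in_Sn :: "nat \<Rightarrow> elt \<Rightarrow> bool" where
  "in_Sn n a \<longleftrightarrow> (\<forall>w. a w \<noteq> 0 \<longrightarrow> w permutes {1..n})"

definition in_Sn_desc :: "nat \<Rightarrow> nat \<Rightarrow> elt \<Rightarrow> bool" where
  "in_Sn_desc n i a \<longleftrightarrow> (\<forall>w. a w \<noteq> 0 \<longrightarrow> w permutes {1..n} \<and>
      (\<forall>p q. i + 1 \<le> p \<and> p < q \<and> q \<le> n \<longrightarrow> w p > w q))"

text \<open>Right action of d_{i,j}: w \<odot> d_{ij} = w t_{ij} if w t_{ij} \<lessdot> w, else 0,
  extended Q[x]-linearly.\<close>
definition act_d :: "nat \<Rightarrow> nat \<Rightarrow> nat \<Rightarrow> elt \<Rightarrow> elt" where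
  "act_d n i j a = (\<lambda>v. if v permutes {1..n} \<and> inv_num n (v \<circ> transpose i j) = inv_num n v + 1
                          then a (v \<circ> transpose i j) else 0)"

definition act_B :: "nat \<Rightarrow> nat \<Rightarrow> nat \<Rightarrow> elt \<Rightarrow> elt" where
  "act_B n i j a = (\<lambda>v. \<Sum>k = 1..i. act_d n k j a v)"

definition act_yB :: "nat \<Rightarrow> qpoly \<Rightarrow> nat \<Rightarrow> nat \<Rightarrow> elt \<Rightarrow> elt" where
  "act_yB n y i j a = (\<lambda>v. y * a v + act_B n i j a v)"

text \<open>Action of R_i(y) = (y + B_{i,i+1}) (y + B_{i,i+2}) ... (y + B_{i,n}); being a right
  action, the leftmost factor acts first.\<close>
definition act_R :: "nat \<Rightarrow> nat \<Rightarrow> qpoly \<Rightarrow> elt \<Rightarrow> elt" where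
  "act_R n i y a = fold (\<lambda>j b. act_yB n y i j b) [i + 1 ..< n + 1] a"

definition act_theta :: "nat \<Rightarrow> nat \<Rightarrow> elt \<Rightarrow> elt" where
  "act_theta n i a = (\<lambda>v. - (\<Sum>j = 1..<i. act_d n j i a v) + (\<Sum>j = i + 1..n. act_d n i j a v))"

end

theory Submission imports Defs begin

lemma inv_num_sum:
  "inv_num n w = (\<Sum>x\<in>{1..n}\<times>{1..n}. if fst x < snd x \<and> w (snd x) < w (fst x) then 1 else 0)"
proof -
  have "{(p, q). 1 \<le> p \<and> p < q \<and> q \<le> n \<and> w p > w q}
      = {x\<in>{1..n}\<times>{1..n}. fst x < snd x \<and> w (snd x) < w (fst x)}" by auto
  then show ?thesis unfolding inv_num_def
    by (simp add: sum.If_cases Int_def)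
qed

lemma inv_num_transp:
  assumes "k \<in> {1..n}" "j \<in> {1..n}"
  shows "inv_num n (w \<circ> transpose k j) =
    (\<Sum>x\<in>{1..n}\<times>{1..n}. if transpose k j (fst x) < transpose k j (snd x) \<and> w (snd x) < w (fst x) then 1 else 0)"
  unfolding inv_num_sum
proof (rule sum.reindex_bij_witness[where i="\<lambda>(a,b). (transpose k j a, transpose k j b)"
      and j="\<lambda>(a,b). (transpose k j a, transpose k j b)"])
qed (use assms in \<open>auto simp: transpose_def\<close>)

lemma cov_diff:
  assumes inj: "inj_on w {1..n}" and kj: "1 \<le> k" "k < j" "j \<le> n"
  shows "int (inv_num n (w \<circ> transpose k j)) - int (inv_num n w) =
    (if w k < w j then 1 else -1) +
    (\<Sum>p\<in>{1..n}-{k,j}. if k < p \<and> p < j then of_bool (w p < w j) - of_bool (w p < w k)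
        + of_bool (w k < w p) - of_bool (w j < w p) else 0)"
proof -
  let ?t = "transpose k j"
  let ?I = "{1..n}"
  define h where "h a b = (if ?t a < ?t b \<and> w b < w a then 1 else 0) - (if a < b \<and> w b < w a then 1 else (0::int))" for a b
  have "int (inv_num n (w \<circ> ?t)) - int (inv_num n w) = (\<Sum>x\<in>?I\<times>?I. h (fst x) (snd x))"
  proof -
    have "inv_num n (w \<circ> ?t) = (\<Sum>x\<in>?I\<times>?I. if ?t (fst x) < ?t (snd x) \<and> w (snd x) < w (fst x) then 1 else 0)"
      using kj by (intro inv_num_transp) auto
    then show ?thesis unfolding inv_num_sum[of n w] h_def
      by (simp add: of_nat_sum flip: sum_subtractf, intro sum.cong, auto)
  qed
  also have "\<dots> = (\<Sum>a\<in>?I. \<Sum>b\<in>?I. h a b)"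
    by (simp add: sum.cartesian_product case_prod_beta)
  finally have e1: "int (inv_num n (w \<circ> ?t)) - int (inv_num n w) = (\<Sum>a\<in>?I. \<Sum>b\<in>?I. h a b)" .
  define R where "R = ?I - {k,j}"
  have IR: "?I = insert k (insert j R)" and kR: "k \<notin> insert j R" and jR: "j \<notin> R" and fR: "finite R"
    using kj by (auto simp: R_def)
  have hRR: "h a b = 0" if "a \<in> R" "b \<in> R" for a b
    using that by (auto simp: h_def R_def transpose_def)
  have row: "(\<Sum>b\<in>?I. h a b) = h a k + h a j + (\<Sum>b\<in>R. h a b)" for a
    unfolding IR using kR jR fR by simp
  have "(\<Sum>a\<in>?I. \<Sum>b\<in>?I. h a b) = (\<Sum>a\<in>?I. h a k + h a j + (\<Sum>b\<in>R. h a b))"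
    using row by simp
  also have "\<dots> = (h k k + h k j + (\<Sum>b\<in>R. h k b)) + (h j k + h j j + (\<Sum>b\<in>R. h j b))
      + (\<Sum>a\<in>R. h a k + h a j + (\<Sum>b\<in>R. h a b))"
    unfolding IR using kR jR fR by simp
  also have "(\<Sum>a\<in>R. h a k + h a j + (\<Sum>b\<in>R. h a b)) = (\<Sum>a\<in>R. h a k + h a j)"
    using hRR by simp
  finally have e2: "(\<Sum>a\<in>?I. \<Sum>b\<in>?I. h a b) = (h k k + h k j + h j k + h j j) +
     (\<Sum>p\<in>R. h k p + h j p + h p k + h p j)"
    by (simp add: sum.distrib algebra_simps)
  have wkj: "w k \<noteq> w j" using inj kj by (auto dest: inj_onD)
  have c1: "h k k + h k j + h j k + h j j = (if w k < w j then 1 else -1)"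
    using kj wkj by (auto simp: h_def)
  have c2: "h k p + h j p + h p k + h p j = (if k < p \<and> p < j then of_bool (w p < w j) - of_bool (w p < w k)
        + of_bool (w k < w p) - of_bool (w j < w p) else 0)" if "p \<in> R" for p
    using that kj by (auto simp: h_def R_def transpose_def)
  show ?thesis unfolding e1 e2 c1 using c2 by (simp add: R_def)
qed


lemma cov_iff:
  assumes perm: "v permutes {1..n}" and kj: "1 \<le> k" "k < j" "j \<le> n"
  shows "inv_num n (v \<circ> transpose k j) = inv_num n v + 1 \<longleftrightarrow>
     v k < v j \<and> (\<forall>p. k < p \<longrightarrow> p < j \<longrightarrow> \<not> (v k < v p \<and> v p < v j))"
proof -
  have inj: "inj_on v {1..n}" using permutes_inj[OF perm] by (simp add: inj_on_def inj_def)
  define g where "g p = (if k < p \<and> p < j then of_bool (v p < v j) - of_bool (v p < v k)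
        + of_bool (v k < v p) - of_bool (v j < v p) else (0::int))" for p
  define R where "R = {1..n} - {k,j}"
  have fR: "finite R" by (simp add: R_def)
  have D: "int (inv_num n (v \<circ> transpose k j)) - int (inv_num n v) =
    (if v k < v j then 1 else -1) + (\<Sum>p\<in>R. g p)"
    unfolding g_def R_def by (rule cov_diff[OF inj kj])
  have vne: "v p \<noteq> v q" if "p \<in> {1..n}" "q \<in> {1..n}" "p \<noteq> q" for p q
    using inj that by (auto dest: inj_onD)
  show ?thesis
  proof (cases "v k < v j")
    case True
    have gp: "g p = (if k < p \<and> p < j \<and> v k < v p \<and> v p < v j then 2 else 0)" if "p \<in> R" for p
    proof -
      have "p \<in> {1..n}" "p \<noteq> k" "p \<noteq> j" using that by (auto simp: R_def)
      then have "v p \<noteq> v k" "v p \<noteq> v j" using vne kj by auto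
      then show ?thesis using True by (auto simp: g_def)
    qed
    have nn: "\<forall>p\<in>R. g p \<ge> 0" using gp by simp
    have "inv_num n (v \<circ> transpose k j) = inv_num n v + 1 \<longleftrightarrow> (\<Sum>p\<in>R. g p) = 0"
      using D True by auto
    also have "\<dots> \<longleftrightarrow> (\<forall>p\<in>R. g p = 0)" using sum_nonneg_eq_0_iff[OF fR] nn by blast
    also have "\<dots> \<longleftrightarrow> (\<forall>p. k < p \<longrightarrow> p < j \<longrightarrow> \<not> (v k < v p \<and> v p < v j))"
      using gp kj by (auto simp: R_def)
    finally show ?thesis using True by simp
  next
    case False
    have gp: "g p \<le> 0" if "p \<in> R" for p
    proof -
      have "p \<in> {1..n}" "p \<noteq> k" "p \<noteq> j" using that by (auto simp: R_def)
      then have "v p \<noteq> v k" "v p \<noteq> v j" using vne kj by auto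
      then show ?thesis using False by (auto simp: g_def)
    qed
    have "(\<Sum>p\<in>R. g p) \<le> 0" using gp by (simp add: sum_nonpos)
    then have "inv_num n (v \<circ> transpose k j) \<noteq> inv_num n v + 1" using D False by auto
    then show ?thesis using False by simp
  qed
qed


lemma comp_tt: "(v \<circ> transpose k j) \<circ> transpose k j = v"
  by (simp add: comp_assoc)

lemma dd0: "act_d n k j (act_d n k j x) = (\<lambda>v. 0)"
  by (rule ext) (simp add: act_d_def comp_tt)

lemma desc_perm: "in_Sn_desc n i x \<Longrightarrow> x w \<noteq> 0 \<Longrightarrow> w permutes {1..n}"
  by (simp add: in_Sn_desc_def)

lemma desc_dec: "in_Sn_desc n i x \<Longrightarrow> x w \<noteq> 0 \<Longrightarrow> i + 1 \<le> p \<Longrightarrow> p < q \<Longrightarrow> q \<le> n \<Longrightarrow> w q < w p"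
  by (simp add: in_Sn_desc_def)

lemma kill:
  assumes x: "in_Sn_desc n i x" and ij: "1 \<le> i" "i + 3 \<le> j" "j \<le> n"
  shows "act_d n (i+1) j x = (\<lambda>v. 0)"
proof (rule ext)
  fix v :: "nat \<Rightarrow> nat"
  show "act_d n (i+1) j x v = 0"
  proof (rule ccontr)
    assume ne: "act_d n (i+1) j x v \<noteq> 0"
    let ?w = "v \<circ> transpose (i+1) j"
    have c: "v permutes {1..n}" "inv_num n ?w = inv_num n v + 1" "x ?w \<noteq> 0"
      using ne by (auto simp: act_d_def split: if_splits)
    have cv: "v (i+1) < v j \<and> (\<forall>p. i+1 < p \<longrightarrow> p < j \<longrightarrow> \<not> (v (i+1) < v p \<and> v p < v j))"
      using cov_iff[OF c(1), of "i+1" j] c(2) ij by simp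
    have d1: "?w (i+2) < ?w (i+1)" using desc_dec[of n i x ?w "i+1" "i+2"] x c(3) ij by simp
    have d2: "?w j < ?w (i+2)" using desc_dec[of n i x ?w "i+2" j] x c(3) ij by simp
    have "v (i+2) < v j" using d1 ij by (simp add: transpose_def)
    moreover have "v (i+1) < v (i+2)" using d2 ij by (simp add: transpose_def)
    ultimately show False using cv ij by auto
  qed
qed

lemma pres_d:
  assumes x: "in_Sn_desc n i x" and kij: "1 \<le> k" "k \<le> i" "i < j" "j \<le> n"
  shows "in_Sn_desc n i (act_d n k j x)"
  unfolding in_Sn_desc_def
proof (intro allI impI)
  fix v assume ne: "act_d n k j x v \<noteq> 0"
  let ?w = "v \<circ> transpose k j"
  have c: "v permutes {1..n}" "inv_num n ?w = inv_num n v + 1" "x ?w \<noteq> 0"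
    using ne by (auto simp: act_d_def split: if_splits)
  have cv: "v k < v j" "\<And>p. k < p \<Longrightarrow> p < j \<Longrightarrow> \<not> (v k < v p \<and> v p < v j)"
    using cov_iff[OF c(1), of k j] c(2) kij by auto
  have inj: "inj v" using permutes_inj[OF c(1)] .
  have dec: "\<And>p q. i + 1 \<le> p \<Longrightarrow> p < q \<Longrightarrow> q \<le> n \<Longrightarrow> ?w q < ?w p"
    using desc_dec[of n i x ?w] x c(3) by blast
  show "v permutes {1..n} \<and> (\<forall>p q. i + 1 \<le> p \<and> p < q \<and> q \<le> n \<longrightarrow> v q < v p)"
  proof (intro conjI allI impI)
    fix p q assume pq: "i + 1 \<le> p \<and> p < q \<and> q \<le> n"
    have pk: "p \<noteq> k" "q \<noteq> k" using pq kij by auto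
    show "v q < v p"
    proof (cases "q = j")
      case True
      have "?w q < ?w p" using dec pq by blast
      then have "v k < v p" using True pk pq by (simp add: transpose_def)
      moreover have "v p \<noteq> v j" using inj True pq by (auto dest: injD)
      ultimately show ?thesis using cv(2)[of p] True pq kij by auto
    next
      case False
      show ?thesis
      proof (cases "p = j")
        case True
        have "?w q < ?w p" using dec pq by blast
        then have "v q < v k" using True pk pq False by (simp add: transpose_def)
        then show ?thesis using cv(1) True by simp
      next
        case False2: False
        have "?w q < ?w p" using dec pq by blast
        then show ?thesis using pk False False2 by (simp add: transpose_def)
      qed
    qed
  qed (rule c(1))
qed

lemma pres_yB:
  assumes x: "in_Sn_desc n i x" and ij: "i < j" "j \<le> n"
  shows "in_Sn_desc n i (act_yB n y i j x)"
  unfolding in_Sn_desc_def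
proof (intro allI impI)
  fix v assume ne: "act_yB n y i j x v \<noteq> 0"
  then have "x v \<noteq> 0 \<or> (\<exists>k\<in>{1..i}. act_d n k j x v \<noteq> 0)"
    unfolding act_yB_def act_B_def by (metis (mono_tags, lifting) add.right_neutral mult_zero_right sum.neutral)
  then show "v permutes {1..n} \<and> (\<forall>p q. i + 1 \<le> p \<and> p < q \<and> q \<le> n \<longrightarrow> v q < v p)"
  proof
    assume "x v \<noteq> 0" then show ?thesis using x by (simp add: in_Sn_desc_def)
  next
    assume "\<exists>k\<in>{1..i}. act_d n k j x v \<noteq> 0"
    then obtain k where "k \<in> {1..i}" "act_d n k j x v \<noteq> 0" by blast
    with pres_d[OF x, of k j] ij show ?thesis by (simp add: in_Sn_desc_def)
  qed
qed


lemma core: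
  assumes a: "in_Sn_desc n i a" and kij: "1 \<le> k" "k \<le> i" "i + 2 \<le> n"
  shows "act_d n (i+1) (i+2) (act_d n k (i+1) a) = act_d n k (i+2) (act_d n (i+1) (i+2) a)"
proof (rule ext)
  fix v :: "nat \<Rightarrow> nat"
  let ?t1 = "transpose (i+1) (i+2)" and ?t2 = "transpose k (i+1)" and ?t3 = "transpose k (i+2)"
  have weq: "v \<circ> ?t1 \<circ> ?t2 = v \<circ> ?t3 \<circ> ?t1"
    using kij by (auto simp: fun_eq_iff transpose_def)
  define w where "w = v \<circ> ?t1 \<circ> ?t2"
  define C1 where "C1 = (inv_num n (v \<circ> ?t1) = inv_num n v + 1)"
  define C2 where "C2 = (inv_num n (v \<circ> ?t1 \<circ> ?t2) = inv_num n (v \<circ> ?t1) + 1)"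
  define C3 where "C3 = (inv_num n (v \<circ> ?t3) = inv_num n v + 1)"
  define C4 where "C4 = (inv_num n (v \<circ> ?t3 \<circ> ?t1) = inv_num n (v \<circ> ?t3) + 1)"
  have L: "act_d n (i+1) (i+2) (act_d n k (i+1) a) v =
      (if v permutes {1..n} \<and> C1 \<and> v \<circ> ?t1 permutes {1..n} \<and> C2 then a w else 0)"
    unfolding act_d_def C1_def C2_def w_def by simp
  have R: "act_d n k (i+2) (act_d n (i+1) (i+2) a) v =
      (if v permutes {1..n} \<and> C3 \<and> v \<circ> ?t3 permutes {1..n} \<and> C4 then a w else 0)"
    unfolding act_d_def C3_def C4_def w_def weq by simp
  show "act_d n (i+1) (i+2) (act_d n k (i+1) a) v = act_d n k (i+2) (act_d n (i+1) (i+2) a) v"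
  proof (cases "v permutes {1..n} \<and> a w \<noteq> 0")
    case False
    then show ?thesis unfolding L R by auto
  next
    case True
    then have vp: "v permutes {1..n}" and aw: "a w \<noteq> 0" by auto
    have p1: "v \<circ> ?t1 permutes {1..n}" "v \<circ> ?t3 permutes {1..n}"
      using vp kij by (auto intro!: permutes_compose permutes_swap_id)
    have d: "w (i+2) < w (i+1)" using desc_dec[of n i a w "i+1" "i+2"] a aw kij by simp
    then have vk: "v (i+1) < v k" using kij by (simp add: w_def transpose_def)
    have e1: "C1 \<longleftrightarrow> v (i+1) < v (i+2)"
      unfolding C1_def using cov_iff[OF vp, of "i+1" "i+2"] kij by auto
    have e2: "C2 \<longleftrightarrow> v k < v (i+2) \<and> (\<forall>p. k < p \<longrightarrow> p < i+1 \<longrightarrow> \<not> (v k < v p \<and> v p < v (i+2)))"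
    proof -
      have "C2 \<longleftrightarrow> (v \<circ> ?t1) k < (v \<circ> ?t1) (i+1) \<and> (\<forall>p. k < p \<longrightarrow> p < i+1 \<longrightarrow>
          \<not> ((v \<circ> ?t1) k < (v \<circ> ?t1) p \<and> (v \<circ> ?t1) p < (v \<circ> ?t1) (i+1)))"
        unfolding C2_def using cov_iff[OF p1(1), of k "i+1"] kij by simp
      also have "\<dots> \<longleftrightarrow> v k < v (i+2) \<and> (\<forall>p. k < p \<longrightarrow> p < i+1 \<longrightarrow> \<not> (v k < v p \<and> v p < v (i+2)))"
        using kij by (auto simp: transpose_def)
      finally show ?thesis .
    qed
    have e3: "C3 \<longleftrightarrow> v k < v (i+2) \<and> (\<forall>p. k < p \<longrightarrow> p < i+2 \<longrightarrow> \<not> (v k < v p \<and> v p < v (i+2)))"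
      unfolding C3_def using cov_iff[OF vp, of k "i+2"] kij by auto
    have e4: "C4 \<longleftrightarrow> v (i+1) < v k"
    proof -
      have "C4 \<longleftrightarrow> (v \<circ> ?t3) (i+1) < (v \<circ> ?t3) (i+2)"
        unfolding C4_def using cov_iff[OF p1(2), of "i+1" "i+2"] kij by auto
      then show ?thesis using kij by (simp add: transpose_def)
    qed
    have e3': "C3 \<longleftrightarrow> v k < v (i+2) \<and> (\<forall>p. k < p \<longrightarrow> p < i+1 \<longrightarrow> \<not> (v k < v p \<and> v p < v (i+2)))"
      unfolding e3
    proof (intro iffI conjI allI impI; (elim conjE)?)
      fix p assume h: "\<forall>p. k < p \<longrightarrow> p < i+2 \<longrightarrow> \<not> (v k < v p \<and> v p < v (i+2))" "k < p" "p < i+1"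
      then show "\<not> (v k < v p \<and> v p < v (i+2))" by auto
    next
      fix p assume h: "\<forall>p. k < p \<longrightarrow> p < i+1 \<longrightarrow> \<not> (v k < v p \<and> v p < v (i+2))" "k < p" "p < i+2"
      show "\<not> (v k < v p \<and> v p < v (i+2))"
      proof (cases "p = i+1")
        case True then show ?thesis using vk by auto
      next
        case False then show ?thesis using h by auto
      qed
    qed auto
    have "(C1 \<and> C2) \<longleftrightarrow> (C3 \<and> C4)" using e1 e2 e3' e4 vk by auto
    then show ?thesis unfolding L R using p1 by simp
  qed
qed


lemma yB_succ: "act_yB n y (i+1) j x v = act_yB n y i j x v + act_d n (i+1) j x v"
  unfolding act_yB_def act_B_def by simp

lemma foldT:
  assumes "in_Sn_desc n i x" "1 \<le> i" "\<forall>j\<in>set js. i + 3 \<le> j \<and> j \<le> n"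
  shows "fold (\<lambda>j b. act_yB n y i j b) js x = fold (\<lambda>j b. act_yB n y (i+1) j b) js x"
  using assms
proof (induction js arbitrary: x)
  case Nil then show ?case by simp
next
  case (Cons j js)
  have j: "i + 3 \<le> j" "j \<le> n" using Cons.prems by auto
  have z: "act_d n (i+1) j x = (\<lambda>v. 0)" using kill[OF Cons.prems(1) Cons.prems(2) j] .
  have e: "act_yB n y (i+1) j x = act_yB n y i j x"
    by (rule ext, unfold yB_succ z) simp
  then have e': "act_yB n y (Suc i) j x = act_yB n y i j x" by simp
  have "in_Sn_desc n i (act_yB n y i j x)" using pres_yB[OF Cons.prems(1)] j by simp
  then show ?case using Cons.IH Cons.prems by (simp add: e')
qed

lemma lin_diff: "act_d n k j (\<lambda>v. b v - c v) = (\<lambda>v. act_d n k j b v - act_d n k j c v)"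
  by (simp add: act_d_def fun_eq_iff)

lemma lin_yB: "act_d n m l (act_yB n y i j a) =
   (\<lambda>v. y * act_d n m l a v + (\<Sum>k=1..i. act_d n m l (act_d n k j a) v))"
proof (rule ext)
  fix v :: "nat \<Rightarrow> nat"
  show "act_d n m l (act_yB n y i j a) v =
   y * act_d n m l a v + (\<Sum>k=1..i. act_d n m l (act_d n k j a) v)"
  proof (cases "v permutes {1..n} \<and> inv_num n (v \<circ> transpose m l) = inv_num n v + 1")
    case True
    then show ?thesis by (simp add: act_d_def act_yB_def act_B_def)
  next
    case False
    have z: "act_d n m l X v = 0" for X unfolding act_d_def by (simp only: if_not_P[OF False])
    show ?thesis unfolding z by simp
  qed
qed

lemma theta_eq:
  assumes a: "in_Sn_desc n i a" and i: "1 \<le> i" "i + 2 \<le> n"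
  shows "act_theta n (i+1) a v = - (\<Sum>j=1..i. act_d n j (i+1) a v) + act_d n (i+1) (i+2) a v"
proof -
  have "{i+1+1..n} = insert (i+2) {i+3..n}" using i by auto
  then have "(\<Sum>j = i + 1 + 1..n. act_d n (i + 1) j a v) = act_d n (i+1) (i+2) a v + (\<Sum>j=i+3..n. act_d n (i + 1) j a v)"
    by simp
  also have "(\<Sum>j=i+3..n. act_d n (i + 1) j a v) = 0"
    using kill[OF a i(1)] by simp
  finally show ?thesis unfolding act_theta_def
    by (simp add: atLeastLessThanSuc_atLeastAtMost)
qed

theorem lemma4p21:
  fixes n i k :: nat and a :: elt
  assumes "1 \<le> i" and "i \<le> n - 2"
    and "in_Sn_desc n i a"
    and "1 \<le> k" and "k \<le> n"
  shows "act_R n i (Xvar k) a =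
         act_R n (i + 1) (Xvar k) (\<lambda>v. Xvar k * a v - act_theta n (i + 1) a v)"
proof -
  define y where "y = Xvar k"
  have i: "1 \<le> i" "i + 2 \<le> n" using assms(1,2) by auto
  have adesc: "in_Sn_desc n i a" by fact
  define F where "F = (\<lambda>j b. act_yB n y i j b)"
  define G where "G = (\<lambda>j b. act_yB n y (i+1) j b)"
  have u1: "[i+1..<n+1] = (i+1) # (i+2) # [i+3..<n+1]" using i by (simp add: upt_conv_Cons numeral_3_eq_3)
  have u2: "[i+1+1..<n+1] = (i+2) # [i+3..<n+1]" using i by (simp add: upt_conv_Cons numeral_3_eq_3)
  define b where "b = act_yB n y i (i+1) a"
  define c where "c = act_d n (i+1) (i+2) a"
  define a' where "a' = (\<lambda>v. y * a v - act_theta n (i + 1) a v)"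
  have bdesc: "in_Sn_desc n i b" unfolding b_def using pres_yB[OF adesc] i by simp
  have b2desc: "in_Sn_desc n i (F (i+2) b)" unfolding F_def using pres_yB[OF bdesc] i by simp
  have LHS: "act_R n i y a = fold F [i+3..<n+1] (F (i+2) b)"
    unfolding act_R_def u1 F_def b_def by simp
  also have "\<dots> = fold G [i+3..<n+1] (F (i+2) b)"
    unfolding F_def G_def by (rule foldT[OF b2desc[unfolded F_def] i(1)]) auto
  finally have L: "act_R n i y a = fold G [i+3..<n+1] (F (i+2) b)" .
  have R: "act_R n (i+1) y a' = fold G [i+3..<n+1] (G (i+2) a')"
    unfolding act_R_def u2 G_def by simp
  have a'eq: "a' = (\<lambda>v. b v - c v)"
    unfolding a'_def b_def c_def using theta_eq[OF adesc i]
    by (simp add: fun_eq_iff act_yB_def act_B_def)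
  have key: "G (i+2) a' = F (i+2) b"
  proof (rule ext)
    fix v
    have cc: "act_d n (i+1) (i+2) c = (\<lambda>v. 0)" unfolding c_def by (rule dd0)
    have bc: "act_d n (i+1) (i+2) b v = y * c v + (\<Sum>m=1..i. act_d n m (i+2) c v)"
      unfolding b_def lin_yB c_def using core[OF adesc _ _ i(2)] by simp
    have "G (i+2) a' v = y * (b v - c v) + (\<Sum>m=1..i. act_d n m (i+2) b v - act_d n m (i+2) c v)
        + (act_d n (i+1) (i+2) b v - act_d n (i+1) (i+2) c v)"
      unfolding G_def a'eq by (simp add: act_yB_def act_B_def lin_diff)
    also have "\<dots> = y * b v + (\<Sum>m=1..i. act_d n m (i+2) b v)"
      using cc bc by (simp add: sum_subtractf algebra_simps)
    also have "\<dots> = F (i+2) b v" unfolding F_def by (simp add: act_yB_def act_B_def)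
    finally show "G (i+2) a' v = F (i+2) b v" .
  qed
  show ?thesis using L R key unfolding y_def[symmetric] a'_def by simp
qed

end
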